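(* Under Assumption A, there exists $P\in\Pi(\mu,\nu)$ with $H(P|\mu\otimes\nu)<\infty$ such that, for $\mu$-a.e. $x$, $$\int(y-x)\,P_x(dy)>0\ \text{ if }x\ge0,\qquad \int(y-x)\,P_x(dy)<0\ \text{ if }x<0.$$
   Context: Standing setting: $\mu,\nu$ are Borel probability measures on $\mathbb{R}$ with finite first moments, in convex order, centered ($\int x\,\mu(dx)=\int y\,\nu(dy)=0$), and $\mu\neq\delta_0$. $\Pi(\mu,\nu)$: couplings; $P_x$: disintegration kernel of $P$ w.r.t. its first marginal; $\mathcal{M}(\mu,\nu)$: martingale couplings ($\int(y-x)\pi_x(dy)=0$ $\mu$-a.s.); $H$ is relative entropy ($+\infty$ if not absolutely continuous). Assumption A: there exists $\bar\pi\in\mathcal{M}(\mu,\nu)$ equivalent to $\mu\otimes\nu$ with $H(\bar\pi|\mu\otimes\nu)<\infty$. *)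

theory Defs
  imports "HOL-Probability.Probability"
begin

definition convex_order :: "real measure \<Rightarrow> real measure \<Rightarrow> bool" where
  "convex_order \<mu> \<nu> \<longleftrightarrow>
     (\<forall>f::real \<Rightarrow> real. convex_on UNIV f \<longrightarrow> integrable \<mu> f \<longrightarrow> integrable \<nu> f \<longrightarrow>
        (\<integral>x. f x \<partial>\<mu>) \<le> (\<integral>y. f y \<partial>\<nu>))"

definition is_coupling :: "real measure \<Rightarrow> real measure \<Rightarrow> (real \<times> real) measure \<Rightarrow> bool" where
  "is_coupling \<mu> \<nu> P \<longleftrightarrow> prob_space P \<and> sets P = sets (borel \<Otimes>\<^sub>M borel) \<and>
     distr P borel fst = \<mu> \<and> distr P borel snd = \<nu>"

definition is_disintegration :: "real measure \<Rightarrow> (real \<Rightarrow> real measure) \<Rightarrow> (real \<times> real) measure \<Rightarrow> bool" where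
  "is_disintegration \<mu> K P \<longleftrightarrow> K \<in> \<mu> \<rightarrow>\<^sub>M prob_algebra borel \<and>
     (\<forall>A\<in>sets borel. \<forall>B\<in>sets borel. emeasure P (A \<times> B) = (\<integral>\<^sup>+x\<in>A. emeasure (K x) B \<partial>\<mu>))"

definition is_martingale_coupling :: "real measure \<Rightarrow> real measure \<Rightarrow> (real \<times> real) measure \<Rightarrow> bool" where
  "is_martingale_coupling \<mu> \<nu> P \<longleftrightarrow> is_coupling \<mu> \<nu> P \<and>
     (\<exists>K. is_disintegration \<mu> K P \<and>
        (AE x in \<mu>. integrable (K x) (\<lambda>y. y - x) \<and> (\<integral>y. (y - x) \<partial>K x) = 0))"

text \<open>The integral is split into positive and negative parts (the negative part is finite for
  finite Q since f ln f >= -1/e).\<close>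
definition rel_entropy :: "'a measure \<Rightarrow> 'a measure \<Rightarrow> ereal" where
  "rel_entropy P Q =
     (if sets P = sets Q \<and> absolutely_continuous Q P then
        (let f = (\<lambda>z. enn2real (RN_deriv Q P z)) in
           enn2ereal (\<integral>\<^sup>+z. ennreal (f z * ln (f z)) \<partial>Q)
           - enn2ereal (\<integral>\<^sup>+z. ennreal (- (f z * ln (f z))) \<partial>Q))
      else \<infinity>)"

end

theory Submission
  imports Defs
begin

locale S =
  fixes \<mu> \<nu> :: "real measure" and \<pi> :: "(real \<times> real) measure" and K :: "real \<Rightarrow> real measure"
  assumes mu: "prob_space \<mu>" and smu: "sets \<mu> = sets borel"
    and nu: "prob_space \<nu>" and snu: "sets \<nu> = sets borel"
    and imu: "integrable \<mu> (\<lambda>x. x)" and inu: "integrable \<nu> (\<lambda>y. y)"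
    and m0: "(\<integral>x. x \<partial>\<mu>) = 0" and n0: "(\<integral>y. y \<partial>\<nu>) = 0"
    and ndirac: "\<mu> \<noteq> return borel 0"
    and coup: "is_coupling \<mu> \<nu> \<pi>" and dis: "is_disintegration \<mu> K \<pi>"
    and mart: "AE x in \<mu>. integrable (K x) (\<lambda>y. y - x) \<and> (\<integral>y. (y - x) \<partial>K x) = 0"
    and ac1: "absolutely_continuous (\<mu> \<Otimes>\<^sub>M \<nu>) \<pi>" and ac2: "absolutely_continuous \<pi> (\<mu> \<Otimes>\<^sub>M \<nu>)"
    and ent: "rel_entropy \<pi> (\<mu> \<Otimes>\<^sub>M \<nu>) < \<infinity>"
begin

sublocale M: pair_prob_space \<mu> \<nu>
  using mu nu by (simp add: pair_prob_space_def pair_sigma_finite_def prob_space_imp_sigma_finite)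

abbreviation "M2 \<equiv> \<mu> \<Otimes>\<^sub>M \<nu>"

lemma smu'[measurable_cong]: "sets \<mu> = sets borel" by (rule smu)
lemma snu'[measurable_cong]: "sets \<nu> = sets borel" by (rule snu)

lemma sM2: "sets M2 = sets (borel \<Otimes>\<^sub>M borel)"
  by (rule sets_pair_measure_cong[OF smu snu])

lemma spi: "sets \<pi> = sets M2"
  using coup sM2 by (simp add: is_coupling_def)

lemma pi_prob: "prob_space \<pi>" using coup by (simp add: is_coupling_def)

lemma pi_fst: "distr \<pi> borel fst = \<mu>" using coup by (simp add: is_coupling_def)
lemma pi_snd: "distr \<pi> borel snd = \<nu>" using coup by (simp add: is_coupling_def)

definition p :: "real \<times> real \<Rightarrow> real" where "p z = enn2real (RN_deriv M2 \<pi> z)"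

lemma p_meas[measurable]: "p \<in> borel_measurable M2"
  unfolding p_def by measurable

lemma p_nonneg: "0 \<le> p z" unfolding p_def by simp

lemma pi_dens: "\<pi> = density M2 (\<lambda>z. ennreal (p z))"
proof -
  have "density M2 (RN_deriv M2 \<pi>) = \<pi>"
    by (rule M.density_RN_deriv[OF ac1 spi])
  moreover have "AE z in M2. RN_deriv M2 \<pi> z \<noteq> \<infinity>"
    by (rule M.RN_deriv_finite[OF _ ac1 spi]) (simp add: pi_prob prob_space_imp_sigma_finite)
  then have "density M2 (RN_deriv M2 \<pi>) = density M2 (\<lambda>z. ennreal (p z))"
    by (intro density_cong) (auto simp: p_def elim!: eventually_mono intro: ennreal_enn2real[symmetric] simp: less_top)
  ultimately show ?thesis by simp
qed

lemma nn_pi: assumes [measurable]: "g \<in> borel_measurable M2"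
  shows "(\<integral>\<^sup>+z. g z \<partial>\<pi>) = (\<integral>\<^sup>+x. \<integral>\<^sup>+y. ennreal (p (x,y)) * g (x,y) \<partial>\<nu> \<partial>\<mu>)"
proof -
  have "(\<integral>\<^sup>+z. g z \<partial>\<pi>) = (\<integral>\<^sup>+z. ennreal (p z) * g z \<partial>M2)"
    by (subst pi_dens) (simp add: nn_integral_density)
  also have "\<dots> = (\<integral>\<^sup>+x. \<integral>\<^sup>+y. ennreal (p (x,y)) * g (x,y) \<partial>\<nu> \<partial>\<mu>)"
    using M.M2.nn_integral_fst[of "\<lambda>z. ennreal (p z) * g z" \<mu>] by simp
  finally show ?thesis .
qed

lemma nn_pi_snd: assumes [measurable]: "g \<in> borel_measurable M2"
  shows "(\<integral>\<^sup>+z. g z \<partial>\<pi>) = (\<integral>\<^sup>+y. \<integral>\<^sup>+x. ennreal (p (x,y)) * g (x,y) \<partial>\<mu> \<partial>\<nu>)"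
proof -
  have "(\<integral>\<^sup>+z. g z \<partial>\<pi>) = (\<integral>\<^sup>+z. ennreal (p z) * g z \<partial>M2)"
    by (subst pi_dens) (simp add: nn_integral_density)
  also have "\<dots> = (\<integral>\<^sup>+y. \<integral>\<^sup>+x. ennreal (p (x,y)) * g (x,y) \<partial>\<mu> \<partial>\<nu>)"
    using M.nn_integral_snd[of "\<lambda>z. ennreal (p z) * g z"] by simp
  finally show ?thesis .
qed

lemma nn_pi_fst: assumes [measurable]: "h \<in> borel_measurable borel"
  shows "(\<integral>\<^sup>+z. h (fst z) \<partial>\<pi>) = (\<integral>\<^sup>+x. h x \<partial>\<mu>)"
proof -
  have "(\<integral>\<^sup>+x. h x \<partial>\<mu>) = (\<integral>\<^sup>+x. h x \<partial>distr \<pi> borel fst)" by (simp add: pi_fst)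
  also have "\<dots> = (\<integral>\<^sup>+z. h (fst z) \<partial>\<pi>)"
    by (rule nn_integral_distr) (auto simp: measurable_cong_sets[OF spi refl] sM2)
  finally show ?thesis by simp
qed

lemma nn_pi_snd': assumes [measurable]: "h \<in> borel_measurable borel"
  shows "(\<integral>\<^sup>+z. h (snd z) \<partial>\<pi>) = (\<integral>\<^sup>+x. h x \<partial>\<nu>)"
proof -
  have "(\<integral>\<^sup>+x. h x \<partial>\<nu>) = (\<integral>\<^sup>+x. h x \<partial>distr \<pi> borel snd)" by (simp add: pi_snd)
  also have "\<dots> = (\<integral>\<^sup>+z. h (snd z) \<partial>\<pi>)"
    by (rule nn_integral_distr) (auto simp: measurable_cong_sets[OF spi refl] sM2)
  finally show ?thesis by simp
qed

lemma AE_p_x: "AE x in \<mu>. (\<integral>\<^sup>+y. ennreal (p (x,y)) \<partial>\<nu>) = 1"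
proof -
  have "density \<mu> (\<lambda>x. \<integral>\<^sup>+y. ennreal (p (x,y)) \<partial>\<nu>) = density \<mu> (\<lambda>x. 1)"
  proof (rule measure_eqI)
    fix A assume A: "A \<in> sets (density \<mu> (\<lambda>x. \<integral>\<^sup>+y. ennreal (p (x,y)) \<partial>\<nu>))"
    then have A': "A \<in> sets borel" using smu by simp
    have "emeasure (density \<mu> (\<lambda>x. \<integral>\<^sup>+y. ennreal (p (x,y)) \<partial>\<nu>)) A
        = (\<integral>\<^sup>+x. (\<integral>\<^sup>+y. ennreal (p (x,y)) \<partial>\<nu>) * indicator A x \<partial>\<mu>)"
      using A by (subst emeasure_density) auto
    also have "\<dots> = (\<integral>\<^sup>+x. \<integral>\<^sup>+y. ennreal (p (x,y)) * indicator A x \<partial>\<nu> \<partial>\<mu>)"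
      by (intro nn_integral_cong) (simp add: nn_integral_multc)
    also have "\<dots> = (\<integral>\<^sup>+z. indicator A (fst z) \<partial>\<pi>)"
      using A' by (subst nn_pi) auto
    also have "\<dots> = (\<integral>\<^sup>+x. indicator A x \<partial>\<mu>)"
      using A' by (subst nn_pi_fst) auto
    also have "\<dots> = emeasure (density \<mu> (\<lambda>x. 1)) A"
      using A by (subst emeasure_density) auto
    finally show "emeasure (density \<mu> (\<lambda>x. \<integral>\<^sup>+y. ennreal (p (x,y)) \<partial>\<nu>)) A = emeasure (density \<mu> (\<lambda>x. 1)) A" .
  qed simp
  then show ?thesis
    by (subst (asm) M.M1.density_unique_iff) auto
qed

lemma AE_p_y: "AE y in \<nu>. (\<integral>\<^sup>+x. ennreal (p (x,y)) \<partial>\<mu>) = 1"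
proof -
  have "density \<nu> (\<lambda>y. \<integral>\<^sup>+x. ennreal (p (x,y)) \<partial>\<mu>) = density \<nu> (\<lambda>x. 1)"
  proof (rule measure_eqI)
    fix A assume A: "A \<in> sets (density \<nu> (\<lambda>y. \<integral>\<^sup>+x. ennreal (p (x,y)) \<partial>\<mu>))"
    then have A': "A \<in> sets borel" using snu by simp
    have "emeasure (density \<nu> (\<lambda>y. \<integral>\<^sup>+x. ennreal (p (x,y)) \<partial>\<mu>)) A
        = (\<integral>\<^sup>+y. (\<integral>\<^sup>+x. ennreal (p (x,y)) \<partial>\<mu>) * indicator A y \<partial>\<nu>)"
      using A by (subst emeasure_density) auto
    also have "\<dots> = (\<integral>\<^sup>+y. \<integral>\<^sup>+x. ennreal (p (x,y)) * indicator A y \<partial>\<mu> \<partial>\<nu>)"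
      by (intro nn_integral_cong) (simp add: nn_integral_multc)
    also have "\<dots> = (\<integral>\<^sup>+z. indicator A (snd z) \<partial>\<pi>)"
      using A' by (subst nn_pi_snd) auto
    also have "\<dots> = (\<integral>\<^sup>+x. indicator A x \<partial>\<nu>)"
      using A' by (subst nn_pi_snd') auto
    also have "\<dots> = emeasure (density \<nu> (\<lambda>x. 1)) A"
      using A by (subst emeasure_density) auto
    finally show "emeasure (density \<nu> (\<lambda>y. \<integral>\<^sup>+x. ennreal (p (x,y)) \<partial>\<mu>)) A = emeasure (density \<nu> (\<lambda>x. 1)) A" .
  qed simp
  then show ?thesis
    by (subst (asm) M.M2.density_unique_iff) auto
qed

lemma AE_p_x': "AE x in \<mu>. integrable \<nu> (\<lambda>y. p (x,y)) \<and> (\<integral>y. p (x,y) \<partial>\<nu>) = 1"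
  using AE_p_x AE_space
proof eventually_elim
  case (elim x)
  have m: "(\<lambda>y. p (x,y)) \<in> borel_measurable \<nu>" using measurable_Pair2[OF p_meas] elim by blast
  have e: "(\<integral>\<^sup>+y. ennreal (p (x,y)) \<partial>\<nu>) = ennreal 1" using elim by simp
  show ?case using nn_integral_eq_integrable[OF m _ _, of 1] e by (simp add: p_nonneg)
qed

lemma AE_p_y': "AE y in \<nu>. integrable \<mu> (\<lambda>x. p (x,y)) \<and> (\<integral>x. p (x,y) \<partial>\<mu>) = 1"
  using AE_p_y AE_space
proof eventually_elim
  case (elim y)
  have m: "(\<lambda>x. p (x,y)) \<in> borel_measurable \<mu>" using measurable_Pair1[OF p_meas] elim by blast
  have e: "(\<integral>\<^sup>+x. ennreal (p (x,y)) \<partial>\<mu>) = ennreal 1" using elim by simp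
  show ?case using nn_integral_eq_integrable[OF m _ _, of 1] e by (simp add: p_nonneg)
qed

end

lemma rect_eq:
  fixes M N :: "(real \<times> real) measure"
  assumes sM: "sets M = sets (borel \<Otimes>\<^sub>M borel)" and sN: "sets N = sets (borel \<Otimes>\<^sub>M borel)"
    and fin: "finite_measure M"
    and eq: "\<And>A B. A \<in> sets borel \<Longrightarrow> B \<in> sets borel \<Longrightarrow> emeasure M (A \<times> B) = emeasure N (A \<times> B)"
  shows "M = N"
proof (rule measure_eqI_generator_eq_countable[OF Int_stable_pair_measure_generator[of borel borel], where \<Omega>=UNIV and A="{UNIV \<times> UNIV}"])
  show "{a \<times> b |a b. a \<in> sets borel \<and> b \<in> sets borel} \<subseteq> Pow UNIV" by simp
  show "emeasure M X = emeasure N X" if "X \<in> {a \<times> b |a b. a \<in> sets borel \<and> b \<in> sets borel}" for X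
  proof -
    from that obtain a b where "X = a \<times> b" "a \<in> sets borel" "b \<in> sets borel" by blast
    then show ?thesis using eq by simp
  qed
  have "sets (borel \<Otimes>\<^sub>M borel :: (real \<times> real) measure) = sigma_sets UNIV {a \<times> b |a b. a \<in> sets borel \<and> b \<in> sets borel}"
    by (simp add: sets_pair_measure)
  then show "sets M = sigma_sets UNIV {a \<times> b |a b. a \<in> sets (borel::real measure) \<and> b \<in> sets (borel::real measure)}"
    "sets N = sigma_sets UNIV {a \<times> b |a b. a \<in> sets (borel::real measure) \<and> b \<in> sets (borel::real measure)}"
    using sM sN by auto
  have "UNIV \<times> UNIV \<in> {a \<times> b |a b. a \<in> sets (borel::real measure) \<and> b \<in> sets (borel::real measure)}"
    by (rule CollectI, rule exI[of _ UNIV], rule exI[of _ UNIV], simp)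
  then show "{UNIV \<times> UNIV} \<subseteq> {a \<times> b |a b. a \<in> sets (borel::real measure) \<and> b \<in> sets (borel::real measure)}" by simp
  show "\<Union> {UNIV \<times> UNIV} = (UNIV :: (real \<times> real) set)" by auto
  show "countable {UNIV \<times> UNIV :: (real \<times> real) set}" by auto
  show "\<And>a. a \<in> {UNIV \<times> UNIV} \<Longrightarrow> emeasure M a \<noteq> \<infinity>"
    using finite_measure.emeasure_finite[OF fin] by auto
qed

context S begin

lemma K_meas[measurable]: "K \<in> \<mu> \<rightarrow>\<^sub>M subprob_algebra borel"
  using dis by (auto simp: is_disintegration_def intro: measurable_prob_algebraD)

lemma K_prob: "x \<in> space \<mu> \<Longrightarrow> prob_space (K x)"
  using dis measurable_space[of K \<mu> "prob_algebra borel" x]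
  by (auto simp: is_disintegration_def space_prob_algebra)

lemma K_sets: "x \<in> space \<mu> \<Longrightarrow> sets (K x) = sets borel"
  using sets_kernel[OF K_meas] by blast

definition "Qk x = distr (K x) (borel \<Otimes>\<^sub>M borel) (Pair x)"

lemma Qk_meas[measurable]: "Qk \<in> \<mu> \<rightarrow>\<^sub>M subprob_algebra (borel \<Otimes>\<^sub>M borel)"
  unfolding Qk_def
proof (rule measurable_distr2[OF _ K_meas])
  show "(\<lambda>(x, y). (x, y)) \<in> \<mu> \<Otimes>\<^sub>M borel \<rightarrow>\<^sub>M borel \<Otimes>\<^sub>M borel"
    by (simp add: measurable_ident_sets[OF sets_pair_measure_cong[OF smu refl]] case_prod_beta')
qed

lemma pi_bind: "\<pi> = \<mu> \<bind> Qk"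
proof (rule rect_eq)
  show "sets \<pi> = sets (borel \<Otimes>\<^sub>M borel)" using spi sM2 by simp
  show "sets (\<mu> \<bind> Qk) = sets (borel \<Otimes>\<^sub>M borel)"
    by (rule sets_bind[OF sets_kernel[OF Qk_meas]]) (use mu prob_space.not_empty in auto)
  show "finite_measure \<pi>" using pi_prob by (simp add: prob_space_def)
  fix A B :: "real set" assume A: "A \<in> sets borel" and B: "B \<in> sets borel"
  have "emeasure \<pi> (A \<times> B) = (\<integral>\<^sup>+x\<in>A. emeasure (K x) B \<partial>\<mu>)"
    using dis A B by (simp add: is_disintegration_def)
  also have "\<dots> = (\<integral>\<^sup>+x. emeasure (Qk x) (A \<times> B) \<partial>\<mu>)"
  proof (rule nn_integral_cong)
    fix x assume x: "x \<in> space \<mu>"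
    have "emeasure (Qk x) (A \<times> B) = emeasure (K x) (Pair x -` (A \<times> B) \<inter> space (K x))"
      unfolding Qk_def using A B x K_sets[OF x]
      by (subst emeasure_distr) (auto simp: measurable_cong_sets[OF K_sets[OF x] refl])
    also have "\<dots> = emeasure (K x) B * indicator A x"
      using sets_eq_imp_space_eq[OF K_sets[OF x]] by (auto split: split_indicator)
    finally show "emeasure (K x) B * indicator A x = emeasure (Qk x) (A \<times> B)" by simp
  qed
  also have "\<dots> = emeasure (\<mu> \<bind> Qk) (A \<times> B)"
    using A B by (subst emeasure_bind[OF _ Qk_meas]) (use mu prob_space.not_empty in auto)
  finally show "emeasure \<pi> (A \<times> B) = emeasure (\<mu> \<bind> Qk) (A \<times> B)" .
qed

lemma nn_K: assumes g[measurable]: "g \<in> borel_measurable (borel \<Otimes>\<^sub>M borel)"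
  shows "(\<integral>\<^sup>+z. g z \<partial>\<pi>) = (\<integral>\<^sup>+x. \<integral>\<^sup>+y. g (x,y) \<partial>K x \<partial>\<mu>)"
proof -
  have "(\<integral>\<^sup>+z. g z \<partial>\<pi>) = (\<integral>\<^sup>+x. \<integral>\<^sup>+z. g z \<partial>Qk x \<partial>\<mu>)"
    by (subst pi_bind) (rule nn_integral_bind[OF g Qk_meas])
  also have "\<dots> = (\<integral>\<^sup>+x. \<integral>\<^sup>+y. g (x,y) \<partial>K x \<partial>\<mu>)"
  proof (rule nn_integral_cong)
    fix x assume x: "x \<in> space \<mu>"
    show "(\<integral>\<^sup>+z. g z \<partial>Qk x) = (\<integral>\<^sup>+y. g (x,y) \<partial>K x)"
      unfolding Qk_def
      by (subst nn_integral_distr) (auto simp: measurable_cong_sets[OF K_sets[OF x] refl])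
  qed
  finally show ?thesis .
qed

lemma abs_ennreal_split: "ennreal \<bar>t::real\<bar> = ennreal t + ennreal (- t)"
  by (cases "t \<ge> 0") (auto simp: ennreal_neg)

lemma K_zero: "AE x in \<mu>. (\<integral>\<^sup>+y. ennreal (y - x) \<partial>K x) = (\<integral>\<^sup>+y. ennreal (x - y) \<partial>K x)"
  using mart
proof eventually_elim
  case (elim x)
  then have i: "integrable (K x) (\<lambda>y. y - x)" and z: "(\<integral>y. (y-x) \<partial>K x) = 0" by auto
  have f1: "(\<integral>\<^sup>+y. ennreal (y - x) \<partial>K x) \<noteq> \<infinity>" and f2: "(\<integral>\<^sup>+ y. ennreal (-(y-x)) \<partial>K x) \<noteq> \<infinity>"
    using integrableD(2,3)[OF i] by auto
  have "enn2real (\<integral>\<^sup>+ y. ennreal (y-x) \<partial>K x) = enn2real (\<integral>\<^sup>+ y. ennreal (-(y-x)) \<partial>K x)"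
    using real_lebesgue_integral_def[OF i] z by simp
  then have "ennreal (enn2real (\<integral>\<^sup>+ y. ennreal (y-x) \<partial>K x)) = ennreal (enn2real (\<integral>\<^sup>+ y. ennreal (-(y-x)) \<partial>K x))"
    by simp
  then show ?case using f1 f2 by (simp add: ennreal_enn2real_if)
qed

definition "Gp x = (\<integral>\<^sup>+y. ennreal ((y - x) * p (x,y)) \<partial>\<nu>)"
definition "Gm x = (\<integral>\<^sup>+y. ennreal ((x - y) * p (x,y)) \<partial>\<nu>)"

lemma Gp_meas[measurable]: "Gp \<in> borel_measurable \<mu>" unfolding Gp_def by measurable
lemma Gm_meas[measurable]: "Gm \<in> borel_measurable \<mu>" unfolding Gm_def by measurable

lemma G_pi:
  assumes A: "A \<in> sets borel" and h[measurable]: "h \<in> borel_measurable (borel \<Otimes>\<^sub>M borel)"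
  shows "(\<integral>\<^sup>+x. (\<integral>\<^sup>+y. ennreal (h (x,y) * p (x,y)) \<partial>\<nu>) * indicator A x \<partial>\<mu>)
      = (\<integral>\<^sup>+z. indicator A (fst z) * ennreal (h z) \<partial>\<pi>)"
proof -
  have "(\<integral>\<^sup>+z. indicator A (fst z) * ennreal (h z) \<partial>\<pi>)
     = (\<integral>\<^sup>+x. \<integral>\<^sup>+y. ennreal (p (x,y)) * (indicator A x * ennreal (h (x,y))) \<partial>\<nu> \<partial>\<mu>)"
    using A by (subst nn_pi) (auto simp: measurable_cong_sets[OF sM2 refl])
  also have "\<dots> = (\<integral>\<^sup>+x. (\<integral>\<^sup>+y. ennreal (h (x,y) * p (x,y)) \<partial>\<nu>) * indicator A x \<partial>\<mu>)"
  proof (rule nn_integral_cong)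
    fix x
    have "(\<integral>\<^sup>+y. ennreal (h (x,y) * p (x,y)) \<partial>\<nu>) * indicator A x
       = (\<integral>\<^sup>+y. ennreal (h (x,y) * p (x,y)) * indicator A x \<partial>\<nu>)"
      by (cases "x \<in> A") auto
    also have "\<dots> = (\<integral>\<^sup>+y. ennreal (p (x,y)) * (indicator A x * ennreal (h (x,y))) \<partial>\<nu>)"
      by (rule nn_integral_cong) (simp add: ennreal_mult'' p_nonneg ac_simps)
    finally show "(\<integral>\<^sup>+y. ennreal (p (x,y)) * (indicator A x * ennreal (h (x,y))) \<partial>\<nu>)
      = (\<integral>\<^sup>+y. ennreal (h (x,y) * p (x,y)) \<partial>\<nu>) * indicator A x" by simp
  qed
  finally show ?thesis by simp
qed

lemma K_pi:
  assumes A: "A \<in> sets borel" and h[measurable]: "h \<in> borel_measurable (borel \<Otimes>\<^sub>M borel)"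
  shows "(\<integral>\<^sup>+z. indicator A (fst z) * ennreal (h z) \<partial>\<pi>) = (\<integral>\<^sup>+x. indicator A x * (\<integral>\<^sup>+y. ennreal (h (x,y)) \<partial>K x) \<partial>\<mu>)"
  using A by (subst nn_K) (auto intro!: nn_integral_cong split: split_indicator)

lemma Gpm: assumes A: "A \<in> sets borel"
  shows "(\<integral>\<^sup>+x. Gp x * indicator A x \<partial>\<mu>) = (\<integral>\<^sup>+x. Gm x * indicator A x \<partial>\<mu>)"
proof -
  have "(\<integral>\<^sup>+x. Gp x * indicator A x \<partial>\<mu>) = (\<integral>\<^sup>+x. indicator A x * (\<integral>\<^sup>+y. ennreal (y - x) \<partial>K x) \<partial>\<mu>)"
    unfolding Gp_def using G_pi[OF A, of "\<lambda>z. snd z - fst z"] K_pi[OF A, of "\<lambda>z. snd z - fst z"] by simp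
  also have "\<dots> = (\<integral>\<^sup>+x. indicator A x * (\<integral>\<^sup>+y. ennreal (x - y) \<partial>K x) \<partial>\<mu>)"
    by (rule nn_integral_cong_AE) (use K_zero in \<open>auto elim!: eventually_mono\<close>)
  also have "\<dots> = (\<integral>\<^sup>+x. Gm x * indicator A x \<partial>\<mu>)"
    unfolding Gm_def using G_pi[OF A, of "\<lambda>z. fst z - snd z"] K_pi[OF A, of "\<lambda>z. fst z - snd z"] by simp
  finally show ?thesis .
qed

lemma nn_abs_mu: "(\<integral>\<^sup>+x. ennreal \<bar>x\<bar> \<partial>\<mu>) < \<infinity>"
  using imu by (simp add: integrable_iff_bounded)
lemma nn_abs_nu: "(\<integral>\<^sup>+x. ennreal \<bar>x\<bar> \<partial>\<nu>) < \<infinity>"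
  using inu by (simp add: integrable_iff_bounded)

lemma nn_pi_abs: "(\<integral>\<^sup>+z. ennreal (\<bar>fst z\<bar> + \<bar>snd z\<bar>) \<partial>\<pi>) < \<infinity>"
proof -
  have "(\<integral>\<^sup>+z. ennreal (\<bar>fst z\<bar> + \<bar>snd z\<bar>) \<partial>\<pi>) = (\<integral>\<^sup>+z. ennreal \<bar>fst z\<bar> + ennreal \<bar>snd z\<bar> \<partial>\<pi>)"
    by (rule nn_integral_cong) (simp add: ennreal_plus)
  also have "\<dots> = (\<integral>\<^sup>+z. ennreal \<bar>fst z\<bar> \<partial>\<pi>) + (\<integral>\<^sup>+z. ennreal \<bar>snd z\<bar> \<partial>\<pi>)"
    by (rule nn_integral_add) (auto simp: measurable_cong_sets[OF spi refl] measurable_cong_sets[OF sM2 refl])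
  also have "\<dots> = (\<integral>\<^sup>+x. ennreal \<bar>x\<bar> \<partial>\<mu>) + (\<integral>\<^sup>+x. ennreal \<bar>x\<bar> \<partial>\<nu>)"
    using nn_pi_fst[of "\<lambda>x. ennreal \<bar>x\<bar>"] nn_pi_snd'[of "\<lambda>x. ennreal \<bar>x\<bar>"] by simp
  also have "\<dots> < \<infinity>" using nn_abs_mu nn_abs_nu by (simp add: less_top)
  finally show ?thesis .
qed

lemma Gp_fin: "(\<integral>\<^sup>+x. Gp x \<partial>\<mu>) \<noteq> top"
proof -
  have "(\<integral>\<^sup>+x. Gp x \<partial>\<mu>) = (\<integral>\<^sup>+z. indicator UNIV (fst z) * ennreal (snd z - fst z) \<partial>\<pi>)"
    using G_pi[of UNIV "\<lambda>z. snd z - fst z"] by (simp add: Gp_def)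
  also have "\<dots> \<le> (\<integral>\<^sup>+z. ennreal (\<bar>fst z\<bar> + \<bar>snd z\<bar>) \<partial>\<pi>)"
    by (intro nn_integral_mono) (simp del: ennreal_plus add: ennreal_leI)
  finally have "(\<integral>\<^sup>+x. Gp x \<partial>\<mu>) < \<infinity>" using nn_pi_abs by (rule le_less_trans)
  then show ?thesis by simp
qed

lemma G_AE: "AE x in \<mu>. Gp x = Gm x \<and> Gp x \<noteq> top"
proof -
  have "density \<mu> Gp = density \<mu> Gm"
  proof (rule measure_eqI)
    fix A assume "A \<in> sets (density \<mu> Gp)"
    then have A: "A \<in> sets borel" using smu by simp
    then show "emeasure (density \<mu> Gp) A = emeasure (density \<mu> Gm) A"
      using Gpm[OF A] smu by (simp add: emeasure_density)
  qed simp
  then have "AE x in \<mu>. Gp x = Gm x"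
    using finite_density_unique[of Gp \<mu> Gm] Gp_fin by auto
  moreover have "AE x in \<mu>. Gp x \<noteq> top"
    using nn_integral_PInf_AE[OF Gp_meas] Gp_fin by simp
  ultimately show ?thesis by auto
qed

lemma mart_p: "AE x in \<mu>. integrable \<nu> (\<lambda>y. (y - x) * p (x,y)) \<and> (\<integral>y. (y - x) * p (x,y) \<partial>\<nu>) = 0"
  using G_AE AE_space
proof eventually_elim
  case (elim x)
  have m[measurable]: "(\<lambda>y. (y - x) * p (x,y)) \<in> borel_measurable \<nu>"
    using measurable_Pair2[OF p_meas] elim by measurable
  have m2[measurable]: "(\<lambda>y. (x - y) * p (x,y)) \<in> borel_measurable \<nu>"
    using measurable_Pair2[OF p_meas] elim by measurable
  have "(\<integral>\<^sup>+y. ennreal (norm ((y - x) * p (x,y))) \<partial>\<nu>) = (\<integral>\<^sup>+y. ennreal ((y - x) * p (x,y)) + ennreal ((x - y) * p (x,y)) \<partial>\<nu>)"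
    by (rule nn_integral_cong) (metis abs_ennreal_split real_norm_def minus_diff_eq mult_minus_left)
  also have "\<dots> = Gp x + Gm x" unfolding Gp_def Gm_def by (rule nn_integral_add) auto
  also have "\<dots> < \<infinity>" using elim by (auto simp: less_top)
  finally have i: "integrable \<nu> (\<lambda>y. (y - x) * p (x,y))" by (intro integrableI_bounded) auto
  have "(\<integral>y. (y - x) * p (x,y) \<partial>\<nu>) = enn2real (Gp x) - enn2real (Gm x)"
    unfolding Gp_def Gm_def real_lebesgue_integral_def[OF i] by (simp add: algebra_simps)
  then show ?case using i elim by simp
qed

end

lemma zero_AE_lemma:
  fixes M :: "real measure"
  assumes "integrable M (\<lambda>x. x)" "(\<integral>x. x \<partial>M) = 0" "AE x in M. 0 \<le> x"
  shows "AE x in M. x = 0"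
  using integral_nonneg_eq_0_iff_AE[OF assms(1,3)] assms(2) by simp

lemma zero_AE_lemma':
  fixes M :: "real measure"
  assumes "integrable M (\<lambda>x. x)" "(\<integral>x. x \<partial>M) = 0" "AE x in M. x \<le> 0"
  shows "AE x in M. x = 0"
proof -
  have "AE x in M. - x = 0"
    using integral_nonneg_eq_0_iff_AE[of M "\<lambda>x. - x"] assms by auto
  then show ?thesis by simp
qed

lemma dirac_lemma:
  fixes M :: "real measure"
  assumes "prob_space M" "sets M = sets borel" "AE x in M. x = 0"
  shows "M = return borel 0"
proof (rule measure_eqI)
  show "sets M = sets (return borel 0)" using assms by simp
  fix A assume "A \<in> sets M"
  then have A: "A \<in> sets borel" using assms by simp
  have "emeasure M A = (\<integral>\<^sup>+x. indicator A x \<partial>M)" using \<open>A \<in> sets M\<close> by simp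
  also have "\<dots> = (\<integral>\<^sup>+x. indicator A 0 \<partial>M)"
    by (rule nn_integral_cong_AE) (use assms(3) in \<open>auto elim!: eventually_mono\<close>)
  also have "\<dots> = indicator A 0"
    using prob_space.emeasure_space_1[OF assms(1)] by simp
  also have "\<dots> = emeasure (return borel 0) A" using A by simp
  finally show "emeasure M A = emeasure (return borel 0) A" .
qed

lemma pos_int_lemma:
  fixes f :: "'a \<Rightarrow> real"
  assumes "integrable M f" "AE x in M. 0 \<le> f x" "\<not> (AE x in M. f x = 0)"
  shows "0 < integral\<^sup>L M f"
  using integral_nonneg_eq_0_iff_AE[OF assms(1,2)] integral_nonneg_AE[OF assms(2)] assms(3) by auto

context S begin

lemma mu_not_zero: "\<not> (AE x in \<mu>. x = 0)"
  using dirac_lemma[OF mu smu] ndirac by blast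

lemma mu_neg: "\<not> (AE x in \<mu>. 0 \<le> x)"
  using zero_AE_lemma[OF imu m0] mu_not_zero by blast

lemma mu_pos: "\<not> (AE x in \<mu>. x < 0)"
proof
  assume "AE x in \<mu>. x < 0"
  then have "AE x in \<mu>. x \<le> 0" by (auto elim: eventually_mono)
  then show False using zero_AE_lemma'[OF imu m0] mu_not_zero by blast
qed

lemma nu_not_zero: "\<not> (AE y in \<nu>. y = 0)"
proof
  assume z: "AE y in \<nu>. y = 0"
  have "AE x in \<mu>. x = 0"
    using mart_p AE_p_x' AE_space
  proof eventually_elim
    case (elim x)
    have [measurable]: "(\<lambda>y. p (x,y)) \<in> borel_measurable \<nu>"
      using measurable_Pair2[OF p_meas] elim by blast
    have "0 = (\<integral>y. (y - x) * p (x,y) \<partial>\<nu>)" using elim by simp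
    also have "\<dots> = (\<integral>y. (- x) * p (x,y) \<partial>\<nu>)"
      by (rule integral_cong_AE) (use z in \<open>auto elim!: eventually_mono\<close>)
    also have "\<dots> = - x" using elim by simp
    finally show ?case by simp
  qed
  then show False using mu_not_zero by blast
qed

lemma nu_neg: "\<not> (AE y in \<nu>. 0 \<le> y)"
  using zero_AE_lemma[OF inu n0] nu_not_zero by blast
lemma nu_pos: "\<not> (AE y in \<nu>. y \<le> 0)"
  using zero_AE_lemma'[OF inu n0] nu_not_zero by blast

lemma p_pos: "AE z in M2. 0 < p z"
proof -
  let ?Z = "{z \<in> space M2. p z = 0}"
  have Zs: "?Z \<in> sets M2" by measurable
  have "emeasure \<pi> ?Z = (\<integral>\<^sup>+z. ennreal (p z) * indicator ?Z z \<partial>M2)"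
    using Zs by (subst pi_dens) (simp add: emeasure_density)
  also have "\<dots> = 0" by (rule nn_integral_zero') (auto split: split_indicator)
  finally have "?Z \<in> null_sets \<pi>" using Zs spi by (simp add: null_sets_def)
  then have "?Z \<in> null_sets M2" using ac2 by (auto simp: absolutely_continuous_def)
  then show ?thesis
    by (rule AE_I') (auto simp: less_le p_nonneg)
qed

lemma p_pos_xy: "AE x in \<mu>. AE y in \<nu>. 0 < p (x,y)"
  using M.AE_pair[OF p_pos] by simp

lemma p_pos_yx: "AE y in \<nu>. AE x in \<mu>. 0 < p (x,y)"
proof -
  have "{z \<in> space M2. 0 < p (fst z, snd z)} \<in> sets M2" by measurable
  then show ?thesis using M.AE_commute[of "\<lambda>x y. 0 < p (x,y)"] p_pos_xy by simp
qed

end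

lemma int_ind: "A \<in> sets M \<Longrightarrow> integrable M f \<Longrightarrow> integrable M (\<lambda>x. indicator A x * (f x::real))"
  using integrable_mult_indicator[of A M f] by simp

context S begin

lemma px_meas: "x \<in> space \<mu> \<Longrightarrow> (\<lambda>y. p (x,y)) \<in> borel_measurable \<nu>"
  using measurable_Pair2[OF p_meas] by blast
lemma py_meas: "y \<in> space \<nu> \<Longrightarrow> (\<lambda>x. p (x,y)) \<in> borel_measurable \<mu>"
  using measurable_Pair1[OF p_meas] by blast

definition "a x = (\<integral>y. indicator {..0} y * p (x,y) \<partial>\<nu>)"
definition "b x = (\<integral>y. indicator {0<..} y * p (x,y) \<partial>\<nu>)"
definition "rm y = (\<integral>x. indicator {..<0} x * p (x,y) \<partial>\<mu>)"
definition "rp y = (\<integral>x. indicator {0..} x * p (x,y) \<partial>\<mu>)"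
definition "cm = (\<integral>y. indicator {0<..} y * rm y \<partial>\<nu>)"
definition "cp = (\<integral>y. indicator {..0} y * rp y \<partial>\<nu>)"

lemma p_swap_meas: "(\<lambda>(y,x). p (x,y)) \<in> borel_measurable (\<nu> \<Otimes>\<^sub>M \<mu>)"
  using measurable_pair_swap[OF p_meas] by (simp add: case_prod_beta')

lemma a_meas[measurable]: "a \<in> borel_measurable \<mu>" unfolding a_def by measurable
lemma b_meas[measurable]: "b \<in> borel_measurable \<mu>" unfolding b_def by measurable
lemma rm_meas[measurable]: "rm \<in> borel_measurable \<nu>"
proof -
  have "(\<lambda>(y,x). indicator {..<0} x * p (x,y)) \<in> borel_measurable (\<nu> \<Otimes>\<^sub>M \<mu>)"
    using p_swap_meas by measurable
  then show ?thesis unfolding rm_def by (rule M.M1.borel_measurable_lebesgue_integral)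
qed
lemma rp_meas[measurable]: "rp \<in> borel_measurable \<nu>"
proof -
  have "(\<lambda>(y,x). indicator {0..} x * p (x,y)) \<in> borel_measurable (\<nu> \<Otimes>\<^sub>M \<mu>)"
    using p_swap_meas by measurable
  then show ?thesis unfolding rp_def by (rule M.M1.borel_measurable_lebesgue_integral)
qed

lemma a_nn: "0 \<le> a x" unfolding a_def by (intro integral_nonneg_AE AE_I2) (simp add: p_nonneg)
lemma b_nn: "0 \<le> b x" unfolding b_def by (intro integral_nonneg_AE AE_I2) (simp add: p_nonneg)
lemma rm_nn: "0 \<le> rm x" unfolding rm_def by (intro integral_nonneg_AE AE_I2) (simp add: p_nonneg)
lemma rp_nn: "0 \<le> rp x" unfolding rp_def by (intro integral_nonneg_AE AE_I2) (simp add: p_nonneg)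

lemma a_le: "AE x in \<mu>. a x \<le> 1"
  using AE_p_x' AE_space
proof eventually_elim
  case (elim x)
  have "a x \<le> (\<integral>y. p (x,y) \<partial>\<nu>)" unfolding a_def
    by (rule integral_mono_AE') (use elim in \<open>auto simp: p_nonneg indicator_def\<close>)
  then show ?case using elim by simp
qed
lemma b_le: "AE x in \<mu>. b x \<le> 1"
  using AE_p_x' AE_space
proof eventually_elim
  case (elim x)
  have "b x \<le> (\<integral>y. p (x,y) \<partial>\<nu>)" unfolding b_def
    by (rule integral_mono_AE') (use elim in \<open>auto simp: p_nonneg indicator_def\<close>)
  then show ?case using elim by simp
qed
lemma rm_le: "AE y in \<nu>. rm y \<le> 1"
  using AE_p_y' AE_space
proof eventually_elim
  case (elim y)
  have "rm y \<le> (\<integral>x. p (x,y) \<partial>\<mu>)" unfolding rm_def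
    by (rule integral_mono_AE') (use elim in \<open>auto simp: p_nonneg indicator_def\<close>)
  then show ?case using elim by simp
qed
lemma rp_le: "AE y in \<nu>. rp y \<le> 1"
  using AE_p_y' AE_space
proof eventually_elim
  case (elim y)
  have "rp y \<le> (\<integral>x. p (x,y) \<partial>\<mu>)" unfolding rp_def
    by (rule integral_mono_AE') (use elim in \<open>auto simp: p_nonneg indicator_def\<close>)
  then show ?case using elim by simp
qed

lemma cm_nn: "0 \<le> cm" unfolding cm_def by (intro integral_nonneg_AE AE_I2) (simp add: rm_nn)
lemma cp_nn: "0 \<le> cp" unfolding cp_def by (intro integral_nonneg_AE AE_I2) (simp add: rp_nn)
lemma cm_le: "cm \<le> 1"
proof -
  have "cm \<le> (\<integral>y. 1 \<partial>\<nu>)" unfolding cm_def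
    by (rule integral_mono_AE') (use rm_le in \<open>auto simp: indicator_def elim!: eventually_mono\<close>)
  then show ?thesis using prob_space.prob_space nu by (simp add: prob_space.emeasure_space_1 measure_def)
qed
lemma cp_le: "cp \<le> 1"
proof -
  have "cp \<le> (\<integral>y. 1 \<partial>\<nu>)" unfolding cp_def
    by (rule integral_mono_AE') (use rp_le in \<open>auto simp: indicator_def elim!: eventually_mono\<close>)
  then show ?thesis using prob_space.prob_space nu by (simp add: prob_space.emeasure_space_1 measure_def)
qed

lemma a_pos: "AE x in \<mu>. 0 < a x"
  using AE_p_x' p_pos_xy AE_space
proof eventually_elim
  case (elim x)
  note [measurable] = px_meas[OF elim(3)]
  show ?case unfolding a_def
  proof (rule pos_int_lemma)
    show "integrable \<nu> (\<lambda>y. indicator {..0} y * p (x, y))" using elim by (intro int_ind) auto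
    show "AE y in \<nu>. 0 \<le> indicator {..0} y * p (x, y)" by (simp add: p_nonneg)
    show "\<not> (AE y in \<nu>. indicator {..0} y * p (x, y) = 0)"
    proof
      assume "AE y in \<nu>. indicator {..0} y * p (x, y) = 0"
      then have "AE y in \<nu>. 0 \<le> y" using elim(2) by eventually_elim (auto simp: indicator_def split: if_splits)
      then show False using nu_neg by blast
    qed
  qed
qed

lemma b_pos: "AE x in \<mu>. 0 < b x"
  using AE_p_x' p_pos_xy AE_space
proof eventually_elim
  case (elim x)
  note [measurable] = px_meas[OF elim(3)]
  show ?case unfolding b_def
  proof (rule pos_int_lemma)
    show "integrable \<nu> (\<lambda>y. indicator {0<..} y * p (x, y))" using elim by (intro int_ind) auto
    show "AE y in \<nu>. 0 \<le> indicator {0<..} y * p (x, y)" by (simp add: p_nonneg)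
    show "\<not> (AE y in \<nu>. indicator {0<..} y * p (x, y) = 0)"
    proof
      assume "AE y in \<nu>. indicator {0<..} y * p (x, y) = 0"
      then have "AE y in \<nu>. y \<le> 0" using elim(2) by eventually_elim (auto simp: indicator_def split: if_splits)
      then show False using nu_pos by blast
    qed
  qed
qed

lemma rm_pos: "AE y in \<nu>. 0 < rm y"
  using AE_p_y' p_pos_yx AE_space
proof eventually_elim
  case (elim y)
  note [measurable] = py_meas[OF elim(3)]
  show ?case unfolding rm_def
  proof (rule pos_int_lemma)
    show "integrable \<mu> (\<lambda>x. indicator {..<0} x * p (x, y))" using elim by (intro int_ind) auto
    show "AE x in \<mu>. 0 \<le> indicator {..<0} x * p (x, y)" by (simp add: p_nonneg)
    show "\<not> (AE x in \<mu>. indicator {..<0} x * p (x, y) = 0)"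
    proof
      assume "AE x in \<mu>. indicator {..<0} x * p (x, y) = 0"
      then have "AE x in \<mu>. 0 \<le> x" using elim(2) by eventually_elim (auto simp: indicator_def split: if_splits)
      then show False using mu_neg by blast
    qed
  qed
qed

lemma rp_pos: "AE y in \<nu>. 0 < rp y"
  using AE_p_y' p_pos_yx AE_space
proof eventually_elim
  case (elim y)
  note [measurable] = py_meas[OF elim(3)]
  show ?case unfolding rp_def
  proof (rule pos_int_lemma)
    show "integrable \<mu> (\<lambda>x. indicator {0..} x * p (x, y))" using elim by (intro int_ind) auto
    show "AE x in \<mu>. 0 \<le> indicator {0..} x * p (x, y)" by (simp add: p_nonneg)
    show "\<not> (AE x in \<mu>. indicator {0..} x * p (x, y) = 0)"
    proof
      assume "AE x in \<mu>. indicator {0..} x * p (x, y) = 0"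
      then have "AE x in \<mu>. x < 0" using elim(2) by eventually_elim (auto simp: indicator_def split: if_splits)
      then show False using mu_pos by blast
    qed
  qed
qed

lemma rm_int: assumes A[measurable]: "A \<in> sets borel" shows "integrable \<nu> (\<lambda>y. indicator A y * y * rm y)"
proof (rule Bochner_Integration.integrable_bound[OF inu])
  show "(\<lambda>y. indicator A y * y * rm y) \<in> borel_measurable \<nu>" by measurable
  show "AE y in \<nu>. norm (indicator A y * y * rm y) \<le> norm y"
    using rm_le
  proof eventually_elim
    case (elim y)
    have "\<bar>y\<bar> * rm y \<le> \<bar>y\<bar>" using elim rm_nn[of y] by (intro mult_left_le) auto
    then show ?case by (auto simp: abs_mult indicator_def rm_nn)
  qed
qed

lemma rp_int: assumes A[measurable]: "A \<in> sets borel" shows "integrable \<nu> (\<lambda>y. indicator A y * y * rp y)"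
proof (rule Bochner_Integration.integrable_bound[OF inu])
  show "(\<lambda>y. indicator A y * y * rp y) \<in> borel_measurable \<nu>" by measurable
  show "AE y in \<nu>. norm (indicator A y * y * rp y) \<le> norm y"
    using rp_le
  proof eventually_elim
    case (elim y)
    have "\<bar>y\<bar> * rp y \<le> \<bar>y\<bar>" using elim rp_nn[of y] by (intro mult_left_le) auto
    then show ?case by (auto simp: abs_mult indicator_def rp_nn)
  qed
qed

lemma bounded_int_nu: fixes g :: "real \<Rightarrow> real" assumes [measurable]: "g \<in> borel_measurable \<nu>" and "AE y in \<nu>. \<bar>g y\<bar> \<le> 1"
  shows "integrable \<nu> g"
  using M.M2.integrable_const_bound[of g 1] assms by simp

lemma bounded_int_mu: fixes g :: "real \<Rightarrow> real" assumes [measurable]: "g \<in> borel_measurable \<mu>" and "AE y in \<mu>. \<bar>g y\<bar> \<le> 1"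
  shows "integrable \<mu> g"
  using M.M1.integrable_const_bound[of g 1] assms by simp

lemma rm_int0: assumes A[measurable]: "A \<in> sets borel" shows "integrable \<nu> (\<lambda>y. indicator A y * rm y)"
  by (rule bounded_int_nu) (use rm_le in \<open>auto simp: indicator_def rm_nn elim!: eventually_mono\<close>)
lemma rp_int0: assumes A[measurable]: "A \<in> sets borel" shows "integrable \<nu> (\<lambda>y. indicator A y * rp y)"
  by (rule bounded_int_nu) (use rp_le in \<open>auto simp: indicator_def rp_nn elim!: eventually_mono\<close>)
lemma a_int0: assumes A[measurable]: "A \<in> sets borel" shows "integrable \<mu> (\<lambda>x. indicator A x * a x)"
  by (rule bounded_int_mu) (use a_le in \<open>auto simp: indicator_def a_nn elim!: eventually_mono\<close>)
lemma b_int0: assumes A[measurable]: "A \<in> sets borel" shows "integrable \<mu> (\<lambda>x. indicator A x * b x)"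
  by (rule bounded_int_mu) (use b_le in \<open>auto simp: indicator_def b_nn elim!: eventually_mono\<close>)

definition "Jm = (\<integral>y. indicator {0<..} y * y * rm y \<partial>\<nu>)"
definition "Jp = (\<integral>y. indicator {..0} y * y * rp y \<partial>\<nu>)"

lemma Jm_pos: "0 < Jm"
  unfolding Jm_def
proof (rule pos_int_lemma)
  show "integrable \<nu> (\<lambda>y. indicator {0<..} y * y * rm y)" by (rule rm_int) simp
  show "AE y in \<nu>. 0 \<le> indicator {0<..} y * y * rm y" by (auto simp: indicator_def rm_nn)
  show "\<not> (AE y in \<nu>. indicator {0<..} y * y * rm y = 0)"
  proof
    assume "AE y in \<nu>. indicator {0<..} y * y * rm y = 0"
    then have "AE y in \<nu>. y \<le> 0" using rm_pos by eventually_elim (auto simp: indicator_def split: if_splits)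
    then show False using nu_pos by blast
  qed
qed

lemma Jp_neg: "Jp < 0"
proof -
  have "0 < (\<integral>y. - (indicator {..0} y * y * rp y) \<partial>\<nu>)"
  proof (rule pos_int_lemma)
    show "integrable \<nu> (\<lambda>y. - (indicator {..0} y * y * rp y))" by (intro integrable_minus rp_int) simp
    show "AE y in \<nu>. 0 \<le> - (indicator {..0} y * y * rp y)"
      by (auto simp: indicator_def rp_nn mult_nonpos_nonneg)
    show "\<not> (AE y in \<nu>. - (indicator {..0} y * y * rp y) = 0)"
    proof
      assume "AE y in \<nu>. - (indicator {..0} y * y * rp y) = 0"
      then have "AE y in \<nu>. 0 \<le> y" using rp_pos by eventually_elim (auto simp: indicator_def split: if_splits)
      then show False using nu_neg by blast
    qed
  qed
  then show ?thesis unfolding Jp_def by simp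
qed

end

context S begin

definition f :: "real \<times> real \<Rightarrow> real" where
  "f z = (if 0 \<le> fst z then p z * (1 - cm * indicator {..0} (snd z)) + a (fst z) * rm (snd z) * indicator {0<..} (snd z)
          else p z * (1 - cp * indicator {0<..} (snd z)) + b (fst z) * rp (snd z) * indicator {..0} (snd z))"

lemma f_meas[measurable]: "f \<in> borel_measurable M2"
  unfolding f_def by measurable

lemma f_nn: "0 \<le> f z"
  using cm_le cp_le a_nn b_nn rm_nn rp_nn p_nonneg
  by (auto simp: f_def indicator_def intro!: add_nonneg_nonneg mult_nonneg_nonneg)

lemma p_int: "integrable M2 p"
proof -
  have e1: "emeasure \<pi> (space M2) = 1"
    using prob_space.emeasure_space_1[OF pi_prob] sets_eq_imp_space_eq[OF spi] by simp
  have e2: "emeasure \<pi> (space M2) = emeasure (density M2 (\<lambda>z. ennreal (p z))) (space M2)"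
    using arg_cong[OF pi_dens, of "\<lambda>M. emeasure M (space M2)"] .
  have e3: "emeasure (density M2 (\<lambda>z. ennreal (p z))) (space M2) = (\<integral>\<^sup>+z. ennreal (p z) \<partial>M2)"
    by (subst emeasure_density) (auto intro!: nn_integral_cong)
  have "(\<integral>\<^sup>+z. ennreal (p z) \<partial>M2) = ennreal 1" using e1 e2 e3 by simp
  then show ?thesis
    by (intro integrableI_nn_integral_finite[where x=1]) (auto simp: p_nonneg)
qed

lemma int_M2_bound: assumes [measurable]: "h \<in> borel_measurable M2" and "\<And>z. \<bar>h z\<bar> \<le> p z"
  shows "integrable M2 h"
  by (rule Bochner_Integration.integrable_bound[OF p_int]) (use assms in \<open>auto simp: p_nonneg\<close>)

lemma Acp: "(\<integral>x. indicator {0..} x * a x \<partial>\<mu>) = cp"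
proof -
  have i: "integrable M2 (\<lambda>(x,y). indicator {0..} x * indicator {..0} y * p (x,y))"
    by (rule int_M2_bound) (auto simp: indicator_def p_nonneg)
  have "(\<integral>x. indicator {0..} x * a x \<partial>\<mu>) = (\<integral>x. \<integral>y. indicator {0..} x * indicator {..0} y * p (x,y) \<partial>\<nu> \<partial>\<mu>)"
    unfolding a_def by (simp add: mult.assoc)
  also have "\<dots> = (\<integral>y. \<integral>x. indicator {0..} x * indicator {..0} y * p (x,y) \<partial>\<mu> \<partial>\<nu>)"
    using M.Fubini_integral[of "\<lambda>x y. indicator {0..} x * indicator {..0} y * p (x,y)"] i by simp
  also have "\<dots> = cp"
    unfolding cp_def rp_def
    by (intro Bochner_Integration.integral_cong refl, subst integral_mult_right_zero[symmetric]) (simp add: ac_simps)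
  finally show ?thesis .
qed

lemma Bcm: "(\<integral>x. indicator {..<0} x * b x \<partial>\<mu>) = cm"
proof -
  have i: "integrable M2 (\<lambda>(x,y). indicator {..<0} x * indicator {0<..} y * p (x,y))"
    by (rule int_M2_bound) (auto simp: indicator_def p_nonneg)
  have "(\<integral>x. indicator {..<0} x * b x \<partial>\<mu>) = (\<integral>x. \<integral>y. indicator {..<0} x * indicator {0<..} y * p (x,y) \<partial>\<nu> \<partial>\<mu>)"
    unfolding b_def by (simp add: mult.assoc)
  also have "\<dots> = (\<integral>y. \<integral>x. indicator {..<0} x * indicator {0<..} y * p (x,y) \<partial>\<mu> \<partial>\<nu>)"
    using M.Fubini_integral[of "\<lambda>x y. indicator {..<0} x * indicator {0<..} y * p (x,y)"] i by simp
  also have "\<dots> = cm"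
    unfolding cm_def rm_def
    by (intro Bochner_Integration.integral_cong refl, subst integral_mult_right_zero[symmetric]) (simp add: ac_simps)
  finally show ?thesis .
qed

lemma rpm: "AE y in \<nu>. integrable \<mu> (\<lambda>x. p (x,y)) \<and> rp y + rm y = 1"
  using AE_p_y' AE_space
proof eventually_elim
  case (elim y)
  note [measurable] = py_meas[OF elim(2)]
  have "rp y + rm y = (\<integral>x. indicator {0..} x * p (x,y) + indicator {..<0} x * p (x,y) \<partial>\<mu>)"
    unfolding rp_def rm_def using elim by (subst Bochner_Integration.integral_add) (auto intro: int_ind)
  also have "\<dots> = (\<integral>x. p (x,y) \<partial>\<mu>)"
    by (rule Bochner_Integration.integral_cong) (auto simp: indicator_def)
  finally show ?case using elim by simp
qed

lemma MX: "AE x in \<mu>. integrable \<nu> (\<lambda>y. f (x,y)) \<and> (\<integral>y. f (x,y) \<partial>\<nu>) = 1"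
  using AE_p_x' AE_space
proof eventually_elim
  case (elim x)
  note [measurable] = px_meas[OF elim(2)]
  have ip: "integrable \<nu> (\<lambda>y. p (x,y))" using elim by simp
  show ?case
  proof (cases "0 \<le> x")
    case True
    have eq: "\<And>y. f (x,y) = p (x,y) - cm * (indicator {..0} y * p (x,y)) + a x * (indicator {0<..} y * rm y)"
      using True by (simp add: f_def algebra_simps)
    have i1: "integrable \<nu> (\<lambda>y. indicator {..0} y * p (x,y))" using ip by (intro int_ind) auto
    have i2: "integrable \<nu> (\<lambda>y. indicator {0<..} y * rm y)" by (rule rm_int0) simp
    have "integrable \<nu> (\<lambda>y. p (x,y) - cm * (indicator {..0} y * p (x,y)) + a x * (indicator {0<..} y * rm y))"
      using ip i1 i2 by auto
    moreover have "(\<integral>y. p (x,y) - cm * (indicator {..0} y * p (x,y)) + a x * (indicator {0<..} y * rm y) \<partial>\<nu>) = 1"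
      using ip i1 i2 elim by (simp add: a_def cm_def)
    ultimately show ?thesis by (simp add: eq)
  next
    case False
    have eq: "\<And>y. f (x,y) = p (x,y) - cp * (indicator {0<..} y * p (x,y)) + b x * (indicator {..0} y * rp y)"
      using False by (simp add: f_def algebra_simps)
    have i1: "integrable \<nu> (\<lambda>y. indicator {0<..} y * p (x,y))" using ip by (intro int_ind) auto
    have i2: "integrable \<nu> (\<lambda>y. indicator {..0} y * rp y)" by (rule rp_int0) simp
    have "integrable \<nu> (\<lambda>y. p (x,y) - cp * (indicator {0<..} y * p (x,y)) + b x * (indicator {..0} y * rp y))"
      using ip i1 i2 by auto
    moreover have "(\<integral>y. p (x,y) - cp * (indicator {0<..} y * p (x,y)) + b x * (indicator {..0} y * rp y) \<partial>\<nu>) = 1"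
      using ip i1 i2 elim by (simp add: b_def cp_def)
    ultimately show ?thesis by (simp add: eq)
  qed
qed

lemma MY: "AE y in \<nu>. integrable \<mu> (\<lambda>x. f (x,y)) \<and> (\<integral>x. f (x,y) \<partial>\<mu>) = 1"
  using rpm AE_space
proof eventually_elim
  case (elim y)
  note [measurable] = py_meas[OF elim(2)]
  have ip: "integrable \<mu> (\<lambda>x. p (x,y))" using elim by simp
  have i1: "integrable \<mu> (\<lambda>x. indicator {0..} x * p (x,y))" using ip by (intro int_ind) auto
  have i2: "integrable \<mu> (\<lambda>x. indicator {..<0} x * p (x,y))" using ip by (intro int_ind) auto
  show ?case
  proof (cases "0 < y")
    case True
    have eq: "\<And>x. f (x,y) = indicator {0..} x * p (x,y) + rm y * (indicator {0..} x * a x) + (1 - cp) * (indicator {..<0} x * p (x,y))"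
      using True by (simp add: f_def indicator_def algebra_simps)
    have i3: "integrable \<mu> (\<lambda>x. indicator {0..} x * a x)" by (rule a_int0) simp
    have "integrable \<mu> (\<lambda>x. indicator {0..} x * p (x,y) + rm y * (indicator {0..} x * a x) + (1 - cp) * (indicator {..<0} x * p (x,y)))"
      using i1 i2 i3 by auto
    moreover have "(\<integral>x. indicator {0..} x * p (x,y) + rm y * (indicator {0..} x * a x) + (1 - cp) * (indicator {..<0} x * p (x,y)) \<partial>\<mu>) = rp y + rm y * cp + (1 - cp) * rm y"
      using i1 i2 i3 by (simp add: Acp rp_def rm_def)
    moreover have "rp y + rm y * cp + (1 - cp) * rm y = 1" using elim by (simp add: algebra_simps)
    ultimately show ?thesis by (simp add: eq)
  next
    case False
    have eq: "\<And>x. f (x,y) = (1 - cm) * (indicator {0..} x * p (x,y)) + indicator {..<0} x * p (x,y) + rp y * (indicator {..<0} x * b x)"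
      using False by (simp add: f_def indicator_def algebra_simps)
    have i3: "integrable \<mu> (\<lambda>x. indicator {..<0} x * b x)" by (rule b_int0) simp
    have "integrable \<mu> (\<lambda>x. (1 - cm) * (indicator {0..} x * p (x,y)) + indicator {..<0} x * p (x,y) + rp y * (indicator {..<0} x * b x))"
      using i1 i2 i3 by auto
    moreover have "(\<integral>x. (1 - cm) * (indicator {0..} x * p (x,y)) + indicator {..<0} x * p (x,y) + rp y * (indicator {..<0} x * b x) \<partial>\<mu>) = (1 - cm) * rp y + rm y + rp y * cm"
      using i1 i2 i3 by (simp add: Bcm rp_def rm_def)
    moreover have "(1 - cm) * rp y + rm y + rp y * cm = 1" using elim by (simp add: algebra_simps)
    ultimately show ?thesis by (simp add: eq)
  qed
qed

end

context S begin

lemma Jm': "(\<integral>y. indicator {0<..} y * (y * rm y) \<partial>\<nu>) = Jm" by (simp add: Jm_def mult.assoc)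
lemma Jp': "(\<integral>y. indicator {..0} y * (y * rp y) \<partial>\<nu>) = Jp" by (simp add: Jp_def mult.assoc)

lemma drift_pos: "AE x in \<mu>. 0 \<le> x \<longrightarrow> integrable \<nu> (\<lambda>y. (y - x) * f (x,y)) \<and> 0 < (\<integral>y. (y - x) * f (x,y) \<partial>\<nu>)"
  using AE_p_x' mart_p a_pos AE_space
proof eventually_elim
  case (elim x)
  note [measurable] = px_meas[OF elim(4)]
  show ?case
  proof
    assume x: "0 \<le> x"
    have ip: "integrable \<nu> (\<lambda>y. p (x,y))" and i0: "integrable \<nu> (\<lambda>y. (y - x) * p (x,y))"
      and z0: "(\<integral>y. (y - x) * p (x,y) \<partial>\<nu>) = 0" using elim by auto
    have "integrable \<nu> (\<lambda>y. (y - x) * p (x,y) + x * p (x,y))" using ip i0 by auto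
    then have iyp: "integrable \<nu> (\<lambda>y. y * p (x,y))" by (simp add: algebra_simps)
    have i1: "integrable \<nu> (\<lambda>y. indicator {..0} y * (y * p (x,y)))" using iyp by (intro int_ind) auto
    have i2: "integrable \<nu> (\<lambda>y. indicator {..0} y * p (x,y))" using ip by (intro int_ind) auto
    have i3: "integrable \<nu> (\<lambda>y. indicator {0<..} y * y * rm y)" by (rule rm_int) simp
    have i4: "integrable \<nu> (\<lambda>y. indicator {0<..} y * rm y)" by (rule rm_int0) simp
    define Ny where "Ny = (\<integral>y. indicator {..0} y * (y * p (x,y)) \<partial>\<nu>)"
    have "0 \<le> (\<integral>y. - (indicator {..0} y * (y * p (x,y))) \<partial>\<nu>)"
      by (intro integral_nonneg_AE AE_I2) (auto simp: indicator_def p_nonneg mult_nonpos_nonneg)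
    then have Ny: "Ny \<le> 0" unfolding Ny_def by simp
    have eq: "\<And>y. (y - x) * f (x,y) = (y - x) * p (x,y) - cm * (indicator {..0} y * (y * p (x,y)))
        + cm * x * (indicator {..0} y * p (x,y)) + a x * (indicator {0<..} y * y * rm y)
        - a x * x * (indicator {0<..} y * rm y)"
      using x by (simp add: f_def indicator_def algebra_simps)
    have "integrable \<nu> (\<lambda>y. (y - x) * p (x,y) - cm * (indicator {..0} y * (y * p (x,y)))
        + cm * x * (indicator {..0} y * p (x,y)) + a x * (indicator {0<..} y * y * rm y)
        - a x * x * (indicator {0<..} y * rm y))"
      using i0 i1 i2 i3 i4 by auto
    moreover have "(\<integral>y. (y - x) * p (x,y) - cm * (indicator {..0} y * (y * p (x,y)))
        + cm * x * (indicator {..0} y * p (x,y)) + a x * (indicator {0<..} y * y * rm y)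
        - a x * x * (indicator {0<..} y * rm y) \<partial>\<nu>) = - cm * Ny + a x * Jm"
      using i0 i1 i2 i3 i4 z0 by (simp add: Ny_def[symmetric] a_def[symmetric] Jm' cm_def[symmetric] mult.assoc)
    moreover have "0 < - cm * Ny + a x * Jm"
      using Ny cm_nn elim(3) Jm_pos by (intro add_nonneg_pos) (auto simp: mult_nonneg_nonpos)
    ultimately show "integrable \<nu> (\<lambda>y. (y - x) * f (x,y)) \<and> 0 < (\<integral>y. (y - x) * f (x,y) \<partial>\<nu>)"
      by (simp add: eq)
  qed
qed

lemma drift_neg: "AE x in \<mu>. x < 0 \<longrightarrow> integrable \<nu> (\<lambda>y. (y - x) * f (x,y)) \<and> (\<integral>y. (y - x) * f (x,y) \<partial>\<nu>) < 0"
  using AE_p_x' mart_p b_pos AE_space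
proof eventually_elim
  case (elim x)
  note [measurable] = px_meas[OF elim(4)]
  show ?case
  proof
    assume x: "x < 0"
    have ip: "integrable \<nu> (\<lambda>y. p (x,y))" and i0: "integrable \<nu> (\<lambda>y. (y - x) * p (x,y))"
      and z0: "(\<integral>y. (y - x) * p (x,y) \<partial>\<nu>) = 0" using elim by auto
    have "integrable \<nu> (\<lambda>y. (y - x) * p (x,y) + x * p (x,y))" using ip i0 by auto
    then have iyp: "integrable \<nu> (\<lambda>y. y * p (x,y))" by (simp add: algebra_simps)
    have i1: "integrable \<nu> (\<lambda>y. indicator {0<..} y * (y * p (x,y)))" using iyp by (intro int_ind) auto
    have i2: "integrable \<nu> (\<lambda>y. indicator {0<..} y * p (x,y))" using ip by (intro int_ind) auto
    have i3: "integrable \<nu> (\<lambda>y. indicator {..0} y * y * rp y)" by (rule rp_int) simp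
    have i4: "integrable \<nu> (\<lambda>y. indicator {..0} y * rp y)" by (rule rp_int0) simp
    define Py where "Py = (\<integral>y. indicator {0<..} y * (y * p (x,y)) \<partial>\<nu>)"
    have Py: "0 \<le> Py" unfolding Py_def
      by (rule integral_nonneg_AE, rule AE_I2) (auto simp: indicator_def p_nonneg)
    have eq: "\<And>y. (y - x) * f (x,y) = (y - x) * p (x,y) - cp * (indicator {0<..} y * (y * p (x,y)))
        + cp * x * (indicator {0<..} y * p (x,y)) + b x * (indicator {..0} y * y * rp y)
        - b x * x * (indicator {..0} y * rp y)"
      using x by (simp add: f_def indicator_def algebra_simps)
    have "integrable \<nu> (\<lambda>y. (y - x) * p (x,y) - cp * (indicator {0<..} y * (y * p (x,y)))
        + cp * x * (indicator {0<..} y * p (x,y)) + b x * (indicator {..0} y * y * rp y)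
        - b x * x * (indicator {..0} y * rp y))"
      using i0 i1 i2 i3 i4 by auto
    moreover have "(\<integral>y. (y - x) * p (x,y) - cp * (indicator {0<..} y * (y * p (x,y)))
        + cp * x * (indicator {0<..} y * p (x,y)) + b x * (indicator {..0} y * y * rp y)
        - b x * x * (indicator {..0} y * rp y) \<partial>\<nu>) = - cp * Py + b x * Jp"
      using i0 i1 i2 i3 i4 z0 by (simp add: Py_def[symmetric] b_def[symmetric] Jp' cp_def[symmetric] mult.assoc)
    moreover have "- cp * Py + b x * Jp < 0"
    proof -
      have "- cp * Py \<le> 0" using Py cp_nn by simp
      moreover have "b x * Jp < 0" using elim(3) Jp_neg by (simp add: mult_pos_neg)
      ultimately show ?thesis by simp
    qed
    ultimately show "integrable \<nu> (\<lambda>y. (y - x) * f (x,y)) \<and> (\<integral>y. (y - x) * f (x,y) \<partial>\<nu>) < 0"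
      by (simp add: eq)
  qed
qed

end

lemma ent_bound:
  fixes t q :: real
  assumes t0: "0 \<le> t" and tq: "t \<le> q + 1" and q0: "0 \<le> q"
  shows "t * ln t \<le> 2 * max 0 (q * ln q) + q + 2"
proof (cases "t \<le> 1")
  case True
  have "t * ln t \<le> 0"
  proof (cases "t = 0")
    case False
    then have "ln t \<le> 0" using True t0 by simp
    then show ?thesis using t0 by (simp add: mult_nonneg_nonpos)
  qed simp
  then show ?thesis using q0 by simp
next
  case False
  then have t1: "1 < t" by simp
  have lt: "ln t \<le> ln (q + 1)" using t1 tq by simp
  have lt0: "0 \<le> ln t" using t1 by simp
  have A: "t * ln t \<le> (q + 1) * ln (q + 1)"
    by (rule mult_mono[OF tq lt]) (use q0 lt0 in auto)
  have ln2: "ln (2::real) \<le> 1" using ln_le_minus_one[of 2] by simp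
  show ?thesis
  proof (cases "q \<le> 1")
    case True
    have "(q + 1) * ln (q + 1) \<le> 2 * ln 2"
      by (rule mult_mono) (use True q0 in auto)
    then show ?thesis using A ln2 q0 by simp
  next
    case False
    then have q1: "1 < q" by simp
    have "ln (q + 1) \<le> ln (2 * q)" using q1 by simp
    also have "\<dots> = ln 2 + ln q" using q1 by (simp add: ln_mult)
    also have "\<dots> \<le> 1 + ln q" using ln2 by simp
    finally have B: "ln (q + 1) \<le> 1 + ln q" .
    have lq0: "0 \<le> ln q" using q1 by simp
    have "(q + 1) * ln (q + 1) \<le> (q + 1) * (1 + ln q)"
      using B q0 by (intro mult_left_mono) auto
    also have "\<dots> = q + 1 + q * ln q + ln q" by (simp add: algebra_simps)
    also have "\<dots> \<le> q + 1 + 2 * (q * ln q)"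
    proof -
      have "ln q \<le> q * ln q" using q1 lq0 by (intro mult_right_mono[of 1 q "ln q", simplified]) auto
      then show ?thesis by simp
    qed
    also have "\<dots> \<le> 2 * max 0 (q * ln q) + q + 2" by simp
    finally show ?thesis using A by simp
  qed
qed

lemma neg_ent_bound: fixes t :: real assumes "0 \<le> t" shows "- (t * ln t) \<le> 1"
proof (cases "t = 0")
  case False
  then have tp: "0 < t" using assms by simp
  have "ln (1 / t) \<le> 1 / t - 1" using tp by (intro ln_le_minus_one) simp
  then have "- ln t \<le> 1 / t - 1" using tp by (simp add: ln_div)
  then have "t * (- ln t) \<le> t * (1 / t - 1)" using tp by (intro mult_left_mono) auto
  also have "\<dots> = 1 - t" using tp by (simp add: field_simps)
  finally show ?thesis using tp by simp
qed simp

lemma ereal_fin_lemma: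
  fixes E E' :: ennreal
  assumes "enn2ereal E - enn2ereal E' < \<infinity>" "E' < top"
  shows "E < top"
proof (rule ccontr)
  assume "\<not> E < top"
  then have "E = top" by (simp add: less_top[symmetric])
  moreover obtain r where "enn2ereal E' = ereal r" using assms(2)
    by (cases "enn2ereal E'") (auto simp: less_top)
  ultimately show False using assms(1) by simp
qed

lemma ereal_fin_lemma2:
  fixes E E' :: ennreal
  assumes "E < top"
  shows "enn2ereal E - enn2ereal E' < \<infinity>"
proof -
  obtain r where "enn2ereal E = ereal r" using assms
    by (cases "enn2ereal E") (auto simp: less_top)
  then show ?thesis by (cases "enn2ereal E'") auto
qed

context S begin

definition "Pm = density M2 (\<lambda>z. ennreal (f z))"
definition "C x \<longleftrightarrow> (\<integral>\<^sup>+y. ennreal (f (x,y)) \<partial>\<nu>) = 1"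
definition "K2 x = (if C x then density \<nu> (\<lambda>y. ennreal (f (x,y))) else return borel 0)"

lemma space_mu: "space \<mu> = UNIV" using sets_eq_imp_space_eq[OF smu] by simp

lemma fx_meas[measurable]: "(\<lambda>y. f (x,y)) \<in> borel_measurable \<nu>"
  using measurable_Pair2[OF f_meas] space_mu by blast

lemma K2_prob: "prob_space (K2 x)"
proof (cases "C x")
  case True
  have [measurable]: "(\<lambda>y. f (x,y)) \<in> borel_measurable \<nu>" using fx_meas by simp
  show ?thesis unfolding K2_def using True
    by (intro prob_spaceI) (auto simp: emeasure_density C_def intro!: nn_integral_cong)
qed (simp add: K2_def prob_space_return)

lemma K2_sets: "sets (K2 x) = sets borel"
  by (simp add: K2_def snu)

lemma K2_emeasure: "A \<in> sets borel \<Longrightarrow> emeasure (K2 x) A = (if C x then (\<integral>\<^sup>+y. ennreal (f (x,y)) * indicator A y \<partial>\<nu>) else indicator A 0)"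
proof -
  assume A: "A \<in> sets borel"
  have [measurable]: "(\<lambda>y. f (x,y)) \<in> borel_measurable \<nu>" using fx_meas by simp
  show ?thesis unfolding K2_def using A snu by (auto simp: emeasure_density)
qed

lemma K2_meas: "K2 \<in> \<mu> \<rightarrow>\<^sub>M prob_algebra borel"
proof (rule measurable_prob_algebraI)
  show "prob_space (K2 x)" for x by (rule K2_prob)
  show "K2 \<in> \<mu> \<rightarrow>\<^sub>M subprob_algebra borel"
  proof (rule measurable_subprob_algebra)
    show "subprob_space (K2 a)" for a using K2_prob prob_space_imp_subprob_space by blast
    show "sets (K2 a) = sets borel" for a by (rule K2_sets)
    fix A :: "real set" assume A[measurable]: "A \<in> sets borel"
    have [measurable]: "Measurable.pred \<mu> C" unfolding C_def by measurable
    have "(\<lambda>a. if C a then (\<integral>\<^sup>+y. ennreal (f (a,y)) * indicator A y \<partial>\<nu>) else indicator A 0) \<in> borel_measurable \<mu>"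
      by measurable
    then show "(\<lambda>a. emeasure (K2 a) A) \<in> borel_measurable \<mu>"
      using K2_emeasure[OF A] by simp
  qed
qed

lemma AE_C: "AE x in \<mu>. C x"
  using MX AE_space
proof eventually_elim
  case (elim x)
  have "(\<integral>\<^sup>+y. ennreal (f (x,y)) \<partial>\<nu>) = ennreal (\<integral>y. f (x,y) \<partial>\<nu>)"
    using elim by (intro nn_integral_eq_integral) (auto simp: f_nn)
  then show ?case using elim by (simp add: C_def)
qed

lemma sPm: "sets Pm = sets M2" by (simp add: Pm_def)

lemma Pm_rect: assumes A: "A \<in> sets borel" and B: "B \<in> sets borel"
  shows "emeasure Pm (A \<times> B) = (\<integral>\<^sup>+x\<in>A. emeasure (K2 x) B \<partial>\<mu>)"
proof -
  have AB: "A \<times> B \<in> sets M2" using A B smu snu by auto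
  have "emeasure Pm (A \<times> B) = (\<integral>\<^sup>+z. ennreal (f z) * indicator (A \<times> B) z \<partial>M2)"
    unfolding Pm_def using AB by (simp add: emeasure_density)
  also have "\<dots> = (\<integral>\<^sup>+x. \<integral>\<^sup>+y. ennreal (f (x,y)) * indicator (A \<times> B) (x,y) \<partial>\<nu> \<partial>\<mu>)"
    using M.M2.nn_integral_fst[of "\<lambda>z. ennreal (f z) * indicator (A \<times> B) z" \<mu>] AB by simp
  also have "\<dots> = (\<integral>\<^sup>+x\<in>A. emeasure (K2 x) B \<partial>\<mu>)"
  proof (rule nn_integral_cong_AE)
    show "AE x in \<mu>. (\<integral>\<^sup>+y. ennreal (f (x,y)) * indicator (A \<times> B) (x,y) \<partial>\<nu>) = emeasure (K2 x) B * indicator A x"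
      using AE_C
    proof eventually_elim
      case (elim x)
      then show ?case using B
        by (cases "x \<in> A") (auto simp: K2_emeasure indicator_times intro!: nn_integral_cong)
    qed
  qed
  finally show ?thesis .
qed

lemma Pm_dis: "is_disintegration \<mu> K2 Pm"
  unfolding is_disintegration_def using K2_meas Pm_rect by auto

lemma space_Pm: "space Pm = UNIV"
  using sets_eq_imp_space_eq[OF sPm] by (simp add: space_pair_measure sets_eq_imp_space_eq[OF smu] sets_eq_imp_space_eq[OF snu])

lemma Pm_fst: "distr Pm borel fst = \<mu>"
proof (rule measure_eqI)
  show "sets (distr Pm borel fst) = sets \<mu>" using smu by simp
  fix A assume "A \<in> sets (distr Pm borel fst)"
  then have A: "A \<in> sets borel" by simp
  have "emeasure (distr Pm borel fst) A = emeasure Pm (A \<times> UNIV)"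
    using A by (subst emeasure_distr) (auto simp: measurable_cong_sets[OF sPm refl] sM2 space_Pm vimage_def intro!: arg_cong[where f="emeasure Pm"])
  also have "\<dots> = (\<integral>\<^sup>+x\<in>A. emeasure (K2 x) UNIV \<partial>\<mu>)" using A by (simp add: Pm_rect)
  also have "\<dots> = (\<integral>\<^sup>+x. indicator A x \<partial>\<mu>)"
    using prob_space.emeasure_space_1[OF K2_prob] sets_eq_imp_space_eq[OF K2_sets] by simp
  also have "\<dots> = emeasure \<mu> A" using A smu by simp
  finally show "emeasure (distr Pm borel fst) A = emeasure \<mu> A" .
qed

lemma Pm_snd: "distr Pm borel snd = \<nu>"
proof (rule measure_eqI)
  show "sets (distr Pm borel snd) = sets \<nu>" using snu by simp
  fix B assume "B \<in> sets (distr Pm borel snd)"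
  then have B: "B \<in> sets borel" by simp
  have UB: "UNIV \<times> B \<in> sets M2" using B smu snu by auto
  have "emeasure (distr Pm borel snd) B = emeasure Pm (UNIV \<times> B)"
    using B by (subst emeasure_distr) (auto simp: measurable_cong_sets[OF sPm refl] sM2 space_Pm vimage_def intro!: arg_cong[where f="emeasure Pm"])
  also have "\<dots> = (\<integral>\<^sup>+z. ennreal (f z) * indicator (UNIV \<times> B) z \<partial>M2)"
    unfolding Pm_def using UB by (simp add: emeasure_density)
  also have "\<dots> = (\<integral>\<^sup>+y. \<integral>\<^sup>+x. ennreal (f (x,y)) * indicator (UNIV \<times> B) (x,y) \<partial>\<mu> \<partial>\<nu>)"
    using M.nn_integral_snd[of "\<lambda>z. ennreal (f z) * indicator (UNIV \<times> B) z"] UB by simp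
  also have "\<dots> = (\<integral>\<^sup>+y. indicator B y \<partial>\<nu>)"
  proof (rule nn_integral_cong_AE)
    show "AE y in \<nu>. (\<integral>\<^sup>+x. ennreal (f (x,y)) * indicator (UNIV \<times> B) (x,y) \<partial>\<mu>) = indicator B y"
      using MY AE_space
    proof eventually_elim
      case (elim y)
      have [measurable]: "(\<lambda>x. f (x,y)) \<in> borel_measurable \<mu>" using measurable_Pair1[OF f_meas] elim by blast
      have "(\<integral>\<^sup>+x. ennreal (f (x,y)) \<partial>\<mu>) = ennreal (\<integral>x. f (x,y) \<partial>\<mu>)"
        using elim by (intro nn_integral_eq_integral) (auto simp: f_nn)
      then have "(\<integral>\<^sup>+x. ennreal (f (x,y)) \<partial>\<mu>) = 1" using elim by simp
      then show ?case
        by (cases "y \<in> B") (auto simp: indicator_times intro!: nn_integral_cong)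
    qed
  qed
  also have "\<dots> = emeasure \<nu> B" using B snu by simp
  finally show "emeasure (distr Pm borel snd) B = emeasure \<nu> B" .
qed

lemma Pm_prob: "prob_space Pm"
proof (rule prob_spaceI)
  have "emeasure Pm (space Pm) = emeasure (distr Pm borel fst) UNIV"
    by (subst emeasure_distr) (auto simp: measurable_cong_sets[OF sPm refl] sM2 space_Pm)
  also have "\<dots> = 1" using Pm_fst prob_space.emeasure_space_1[OF mu] sets_eq_imp_space_eq[OF smu] by simp
  finally show "emeasure Pm (space Pm) = 1" .
qed

lemma Pm_coupling: "is_coupling \<mu> \<nu> Pm"
  unfolding is_coupling_def using Pm_prob sPm sM2 Pm_fst Pm_snd by auto

end

lemma ennreal_bound_split: "0 \<le> (q::real) \<Longrightarrow> ennreal (2 * max 0 u + q + 2) = 2 * ennreal u + ennreal q + 2"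
proof -
  assume q: "0 \<le> q"
  have "ennreal (2 * max 0 u + q + 2) = ennreal (2 * max 0 u) + ennreal q + ennreal 2"
    using q by (simp add: ennreal_plus del: ennreal_numeral)
  also have "ennreal (2 * max 0 u) = 2 * ennreal (max 0 u)" by (simp add: ennreal_mult)
  also have "ennreal (max 0 u) = ennreal u" by (simp add: ennreal_max_0)
  finally show ?thesis by simp
qed

context S begin

lemma p_fun: "(\<lambda>z. enn2real (RN_deriv M2 \<pi> z)) = p" by (simp add: p_def fun_eq_iff)

lemma ent_pi_fin: "(\<integral>\<^sup>+z. ennreal (p z * ln (p z)) \<partial>M2) < top"
proof (rule ereal_fin_lemma)
  have "rel_entropy \<pi> M2 = enn2ereal (\<integral>\<^sup>+z. ennreal (p z * ln (p z)) \<partial>M2) - enn2ereal (\<integral>\<^sup>+z. ennreal (- (p z * ln (p z))) \<partial>M2)"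
    unfolding rel_entropy_def using spi ac1 by (simp add: Let_def p_fun)
  then show "enn2ereal (\<integral>\<^sup>+z. ennreal (p z * ln (p z)) \<partial>M2) - enn2ereal (\<integral>\<^sup>+z. ennreal (- (p z * ln (p z))) \<partial>M2) < \<infinity>"
    using ent by simp
  have "(\<integral>\<^sup>+z. ennreal (- (p z * ln (p z))) \<partial>M2) \<le> (\<integral>\<^sup>+z. 1 \<partial>M2)"
    using neg_ent_bound[OF p_nonneg] by (intro nn_integral_mono) (simp add: minus_le_iff)
  also have "\<dots> = 1" using M.emeasure_space_1 by simp
  finally show "(\<integral>\<^sup>+z. ennreal (- (p z * ln (p z))) \<partial>M2) < top" by (simp add: le_less_trans)
qed

lemma f_le: "AE z in M2. f z \<le> p z + 1"
proof -
  have "AE x in \<mu>. AE y in \<nu>. f (x,y) \<le> p (x,y) + 1"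
    using a_le b_le
  proof eventually_elim
    case (elim x)
    note ex = elim
    show ?case using rm_le rp_le
    proof eventually_elim
      case (elim y)
      note elim2 = elim
      have am: "a x * rm y \<le> 1" using ex elim2 a_nn rm_nn by (intro mult_le_one) auto
      have bp: "b x * rp y \<le> 1" using ex elim2 b_nn rp_nn by (intro mult_le_one) auto
      have c1: "p (x,y) * (1 - cm * indicator {..0} y) \<le> p (x,y)"
        using cm_nn p_nonneg[of "(x,y)"] by (intro mult_left_le) (auto simp: indicator_def)
      have c2: "p (x,y) * (1 - cp * indicator {0<..} y) \<le> p (x,y)"
        using cp_nn p_nonneg[of "(x,y)"] by (intro mult_left_le) (auto simp: indicator_def)
      show ?case using am bp c1 c2 by (auto simp: f_def indicator_def)
    qed
  qed
  then show ?thesis by (rule M.AE_pair_measure[rotated]) measurable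
qed

lemma ent_P_fin: "rel_entropy Pm M2 < \<infinity>"
proof -
  let ?g = "\<lambda>z. enn2real (RN_deriv M2 Pm z)"
  have ac: "absolutely_continuous M2 Pm" unfolding Pm_def by (rule absolutely_continuousI_density) measurable
  have re: "rel_entropy Pm M2 = enn2ereal (\<integral>\<^sup>+z. ennreal (?g z * ln (?g z)) \<partial>M2) - enn2ereal (\<integral>\<^sup>+z. ennreal (- (?g z * ln (?g z))) \<partial>M2)"
    unfolding rel_entropy_def using sPm ac by (simp add: Let_def)
  have "AE z in M2. ennreal (f z) = RN_deriv M2 Pm z"
    by (rule M.RN_deriv_unique) (auto simp: Pm_def)
  then have gf: "AE z in M2. ?g z = f z"
    by eventually_elim (metis enn2real_ennreal f_nn)
  have "(\<integral>\<^sup>+z. ennreal (?g z * ln (?g z)) \<partial>M2) = (\<integral>\<^sup>+z. ennreal (f z * ln (f z)) \<partial>M2)"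
    by (rule nn_integral_cong_AE) (use gf in \<open>auto elim!: eventually_mono\<close>)
  also have "\<dots> \<le> (\<integral>\<^sup>+z. 2 * ennreal (p z * ln (p z)) + ennreal (p z) + 2 \<partial>M2)"
  proof (rule nn_integral_mono_AE)
    show "AE z in M2. ennreal (f z * ln (f z)) \<le> 2 * ennreal (p z * ln (p z)) + ennreal (p z) + 2"
      using f_le
    proof eventually_elim
      case (elim z)
      have "ennreal (f z * ln (f z)) \<le> ennreal (2 * max 0 (p z * ln (p z)) + p z + 2)"
        by (rule ennreal_leI, rule ent_bound) (use elim f_nn p_nonneg in auto)
      also have "\<dots> = 2 * ennreal (p z * ln (p z)) + ennreal (p z) + 2"
        by (rule ennreal_bound_split) (rule p_nonneg)
      finally show ?case .
    qed
  qed
  also have "\<dots> = 2 * (\<integral>\<^sup>+z. ennreal (p z * ln (p z)) \<partial>M2) + (\<integral>\<^sup>+z. ennreal (p z) \<partial>M2) + (\<integral>\<^sup>+z. 2 \<partial>M2)"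
    by (simp add: nn_integral_add nn_integral_cmult)
  also have "\<dots> < top"
  proof -
    have "(\<integral>\<^sup>+z. ennreal (p z) \<partial>M2) < top" using integrableD(2)[OF p_int] by (simp add: less_top)
    moreover have "(\<integral>\<^sup>+z. 2 \<partial>M2) < top" using M.emeasure_space_1 by simp
    ultimately show ?thesis using ent_pi_fin by (simp add: ennreal_mult_less_top)
  qed
  finally have "(\<integral>\<^sup>+z. ennreal (?g z * ln (?g z)) \<partial>M2) < top" .
  then show ?thesis unfolding re by (rule ereal_fin_lemma2)
qed

lemma drift_K2: "AE x in \<mu>. (0 \<le> x \<longrightarrow> (\<integral>y. (y - x) \<partial>K2 x) > 0) \<and> (x < 0 \<longrightarrow> (\<integral>y. (y - x) \<partial>K2 x) < 0)"
  using AE_C drift_pos drift_neg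
proof eventually_elim
  case (elim x)
  have "(\<integral>y. (y - x) \<partial>K2 x) = (\<integral>y. (y - x) * f (x,y) \<partial>\<nu>)"
    using elim(1) unfolding K2_def by (simp add: integral_density f_nn mult.commute)
  then show ?case using elim by simp
qed

lemma main_S: "\<exists>P. is_coupling \<mu> \<nu> P \<and> rel_entropy P (\<mu> \<Otimes>\<^sub>M \<nu>) < \<infinity> \<and>
           (\<exists>K. is_disintegration \<mu> K P \<and>
              (AE x in \<mu>. (x \<ge> 0 \<longrightarrow> (\<integral>y. (y - x) \<partial>K x) > 0) \<and>
                          (x < 0 \<longrightarrow> (\<integral>y. (y - x) \<partial>K x) < 0)))"
  using Pm_coupling ent_P_fin Pm_dis drift_K2 by blast

end

theorem mainTheorem4:
  fixes \<mu> \<nu> :: "real measure"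
  assumes "prob_space \<mu>" and "sets \<mu> = sets borel"
    and "prob_space \<nu>" and "sets \<nu> = sets borel"
    and "integrable \<mu> (\<lambda>x. x)" and "integrable \<nu> (\<lambda>y. y)"
    and "convex_order \<mu> \<nu>"
    and "(\<integral>x. x \<partial>\<mu>) = 0" and "(\<integral>y. y \<partial>\<nu>) = 0"
    and "\<mu> \<noteq> return borel 0"
    and assumptionA: "\<exists>\<pi>. is_martingale_coupling \<mu> \<nu> \<pi> \<and>
            absolutely_continuous (\<mu> \<Otimes>\<^sub>M \<nu>) \<pi> \<and> absolutely_continuous \<pi> (\<mu> \<Otimes>\<^sub>M \<nu>) \<and>
            rel_entropy \<pi> (\<mu> \<Otimes>\<^sub>M \<nu>) < \<infinity>"
  shows "\<exists>P. is_coupling \<mu> \<nu> P \<and> rel_entropy P (\<mu> \<Otimes>\<^sub>M \<nu>) < \<infinity> \<and>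
           (\<exists>K. is_disintegration \<mu> K P \<and>
              (AE x in \<mu>. (x \<ge> 0 \<longrightarrow> (\<integral>y. (y - x) \<partial>K x) > 0) \<and>
                          (x < 0 \<longrightarrow> (\<integral>y. (y - x) \<partial>K x) < 0)))"
proof -
  from assumptionA obtain \<pi> where mc: "is_martingale_coupling \<mu> \<nu> \<pi>"
    and ac1: "absolutely_continuous (\<mu> \<Otimes>\<^sub>M \<nu>) \<pi>" and ac2: "absolutely_continuous \<pi> (\<mu> \<Otimes>\<^sub>M \<nu>)"
    and ent: "rel_entropy \<pi> (\<mu> \<Otimes>\<^sub>M \<nu>) < \<infinity>" by blast
  from mc obtain K where coup: "is_coupling \<mu> \<nu> \<pi>" and dis: "is_disintegration \<mu> K \<pi>"
    and mart: "AE x in \<mu>. integrable (K x) (\<lambda>y. y - x) \<and> (\<integral>y. (y - x) \<partial>K x) = 0"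
    unfolding is_martingale_coupling_def by blast
  interpret S \<mu> \<nu> \<pi> K
    using assms(1-6,8-10) coup dis mart ac1 ac2 ent by (simp add: S_def)
  show ?thesis by (rule main_S)
qed

end
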